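(* For every configuration $\mathcal{C}$ of $d$ doors, $\mathrm{Price}(\mathcal{C})\le d$, where $\mathrm{Price}(\mathcal{C})=\mathbb{T}_{\mathcal{C}}\big/\sum_{i=1}^d E_i$.
   Context: Dependent doors model. Fix an integer $d\ge 2$ and doors $1,\dots,d$, all initially closed; once a door opens it stays open forever. A configuration $\mathcal{C}$ specifies for each door $i$ a function $\phi_i^{\mathcal{C}}$ mapping every finite nonempty sequence $(X_1,\dots,X_n)$ of subsets of $\{1,\dots,i-1\}$ to $[0,1]$: $\phi_i^{\mathcal{C}}(X_1,\dots,X_n)$ is the probability that door $i$ has opened during $n$ knocks on it, where $X_j$ is the set of open doors among $\{1,\dots,i-1\}$ at the time of the $j$-th knock on door $i$ (so a closed door $i$ opens at its $n$-th knock with conditional probability $(\phi_i(X_1..X_n)-\phi_i(X_1..X_{n-1}))/(1-\phi_i(X_1..X_{n-1}))$, with $\phi_i$ of the empty sequence equal to $0$). Configurations are assumed monotone ($\phi_i(X')\le\phi_i(X)$ whenever $X'$ is a, not necessarily consecutive, subsequence of $X$) and positively correlated ($\phi_i(X'_1,\dots,X'_n)\le\phi_i(X_1,\dots,X_n)$ whenever $X'_j\subseteq X_j$ for all $j$). The fundamental distribution of door $i$ is $p_i(n)=1-\phi_i(\{1,\dots,i-1\}^n)$ ($p_i(0)=1$), and $E_i=\sum_{n\ge0}p_i(n)$ is assumed finite. A knock sequence $\pi$ is an infinite sequence of door indices, executed in order without any feedback; $\mathbb{T}_{\mathcal{C}}(\pi)$ is the expected number of knocks until all $d$ doors are open, and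 $\mathbb{T}_{\mathcal{C}}=\inf_\pi \mathbb{T}_{\mathcal{C}}(\pi)$. *)

theory Defs
  imports "HOL-Probability.Probability" "HOL-Library.Sublist"
begin

text \<open>Doors are 1..d. A configuration is given by phi :: nat => nat set list => real,
  where phi i xs is the probability that door i has opened during length xs knocks,
  xs listing the sets of open doors among 1..i-1 at the times of these knocks.\<close>

definition valid_seq :: "nat \<Rightarrow> nat set list \<Rightarrow> bool" where
  "valid_seq i xs \<longleftrightarrow> xs \<noteq> [] \<and> set xs \<subseteq> Pow {1..<i}"

definition phi0 :: "(nat \<Rightarrow> nat set list \<Rightarrow> real) \<Rightarrow> nat \<Rightarrow> nat set list \<Rightarrow> real" where
  "phi0 phi i xs = (if xs = [] then 0 else phi i xs)"

definition fund :: "(nat \<Rightarrow> nat set list \<Rightarrow> real) \<Rightarrow> nat \<Rightarrow> nat \<Rightarrow> real" where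
  "fund phi i n = (if n = 0 then 1 else 1 - phi i (replicate n {1..<i}))"

definition E_door :: "(nat \<Rightarrow> nat set list \<Rightarrow> real) \<Rightarrow> nat \<Rightarrow> real" where
  "E_door phi i = (\<Sum>n. fund phi i n)"

definition config :: "nat \<Rightarrow> (nat \<Rightarrow> nat set list \<Rightarrow> real) \<Rightarrow> bool" where
  "config d phi \<longleftrightarrow> (\<forall>i\<in>{1..d}.
     (\<forall>xs. valid_seq i xs \<longrightarrow> 0 \<le> phi i xs \<and> phi i xs \<le> 1)
   \<and> (\<forall>xs ys. valid_seq i xs \<and> valid_seq i ys \<and> subseq ys xs \<longrightarrow> phi i ys \<le> phi i xs)
   \<and> (\<forall>xs ys. valid_seq i xs \<and> valid_seq i ys \<and> list_all2 (\<subseteq>) ys xs \<longrightarrow> phi i ys \<le> phi i xs)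
   \<and> summable (fund phi i))"

text \<open>Distribution of the history [S_0, ..., S_t] of open-door sets after t knocks
  following knock sequence ks (knock number s, 0-indexed, is on door ks s and sees state S_s).\<close>
fun hist :: "(nat \<Rightarrow> nat set list \<Rightarrow> real) \<Rightarrow> (nat \<Rightarrow> nat) \<Rightarrow> nat \<Rightarrow> nat set list pmf" where
  "hist phi ks 0 = return_pmf [{}]"
| "hist phi ks (Suc t) = bind_pmf (hist phi ks t) (\<lambda>h.
     let i = ks t; S = last h in
     if i \<in> S then return_pmf (h @ [S])
     else let xs = [h ! s \<inter> {1..<i}. s \<leftarrow> [0..<Suc t], ks s = i];
              prev = phi0 phi i (butlast xs);
              cur = phi i xs
          in map_pmf (\<lambda>b. h @ [if b then insert i S else S])
                     (bernoulli_pmf ((cur - prev) / (1 - prev))))"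

text \<open>Expected number of knocks until all doors are open: sum over t of P(not all open after t knocks).\<close>
definition exp_time :: "nat \<Rightarrow> (nat \<Rightarrow> nat set list \<Rightarrow> real) \<Rightarrow> (nat \<Rightarrow> nat) \<Rightarrow> ennreal" where
  "exp_time d phi ks = (\<Sum>t. ennreal (measure_pmf.prob (hist phi ks t) {h. last h \<noteq> {1..d}}))"

definition opt_time :: "nat \<Rightarrow> (nat \<Rightarrow> nat set list \<Rightarrow> real) \<Rightarrow> ennreal" where
  "opt_time d phi = (INF ks \<in> {ks. \<forall>t. ks t \<in> {1..d}}. exp_time d phi ks)"

definition price :: "nat \<Rightarrow> (nat \<Rightarrow> nat set list \<Rightarrow> real) \<Rightarrow> ennreal" where
  "price d phi = opt_time d phi / ennreal (\<Sum>i=1..d. E_door phi i)"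

end

theory Submission
  imports Defs
begin

definition stp :: "(nat \<Rightarrow> nat set list \<Rightarrow> real) \<Rightarrow> (nat \<Rightarrow> nat) \<Rightarrow> nat \<Rightarrow> nat set list \<Rightarrow> nat set list pmf" where
  "stp phi ks t h = (let i = ks t; S = last h in
     if i \<in> S then return_pmf (h @ [S])
     else let xs = [h ! s \<inter> {1..<i}. s \<leftarrow> [0..<Suc t], ks s = i];
              prev = phi0 phi i (butlast xs);
              cur = phi i xs
          in map_pmf (\<lambda>b. h @ [if b then insert i S else S])
                     (bernoulli_pmf ((cur - prev) / (1 - prev))))"
lemma hist_Suc: "hist phi ks (Suc t) = bind_pmf (hist phi ks t) (stp phi ks t)"
  unfolding hist.simps stp_def[abs_def] ..
declare hist.simps(2)[simp del]

lemma comp_eq: "concat (map (\<lambda>s. if P s then [f s] else []) xs) = map f (filter P xs)"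
  by (induction xs) auto

lemma stp_set:
  assumes "h' \<in> set_pmf (stp phi ks t h)"
  shows "\<exists>S'. h' = h @ [S'] \<and> last h \<subseteq> S' \<and> S' \<subseteq> insert (ks t) (last h)"
  using assms unfolding stp_def Let_def by (cases "ks t \<in> last h") auto

lemma hist_supp:
  assumes "h \<in> set_pmf (hist phi ks t)"
  shows "length h = Suc t \<and> h ! 0 = {} \<and> (\<forall>s s'. s \<le> s' \<longrightarrow> s' \<le> t \<longrightarrow> h!s \<subseteq> h!s')
     \<and> (\<forall>s\<le>t. h!s \<subseteq> ks ` {..<t})"
  using assms
proof (induction t arbitrary: h)
  case 0
  then show ?case by auto
next
  case (Suc t)
  from Suc.prems obtain h0 where h0: "h0 \<in> set_pmf (hist phi ks t)" and h: "h \<in> set_pmf (stp phi ks t h0)"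
    by (auto simp: hist_Suc)
  from stp_set[OF h] obtain S' where S': "h = h0 @ [S']" "last h0 \<subseteq> S'" "S' \<subseteq> insert (ks t) (last h0)" by blast
  note IH = Suc.IH[OF h0]
  have lst: "last h0 = h0 ! t" using IH by (metis diff_Suc_1 last_conv_nth list.size(3) nat.distinct(1))
  have nth: "\<And>s. s \<le> Suc t \<Longrightarrow> h ! s = (if s \<le> t then h0 ! s else S')"
    using IH S' by (auto simp: nth_append)
  show ?case
  proof (intro conjI allI impI)
    show "length h = Suc (Suc t)" using IH S' by simp
    show "h ! 0 = {}" using nth[of 0] IH by simp
  next
    fix s s' assume a: "s \<le> s'" "s' \<le> Suc t"
    show "h ! s \<subseteq> h ! s'"
    proof (cases "s' \<le> t")
      case True then show ?thesis using a nth IH by auto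
    next
      case False
      then have "s' = Suc t" using a by auto
      show ?thesis
      proof (cases "s \<le> t")
        case True
        then have "h ! s = h0 ! s" "h ! s' = S'" using nth \<open>s' = Suc t\<close> by auto
        moreover have "h0 ! s \<subseteq> h0 ! t" using IH True by blast
        ultimately show ?thesis using lst S'(2) by auto
      next
        case False
        then have "s = Suc t" using a \<open>s' = Suc t\<close> by simp
        then show ?thesis using \<open>s' = Suc t\<close> by simp
      qed
    qed
  next
    fix s assume a: "s \<le> Suc t"
    show "h ! s \<subseteq> ks ` {..<Suc t}"
    proof (cases "s \<le> t")
      case True
      then have "h ! s = h0 ! s" using nth by auto
      moreover have "h0 ! s \<subseteq> ks ` {..<t}" using IH True by blast
      moreover have "ks ` {..<t} \<subseteq> ks ` {..<Suc t}" by auto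
      ultimately show ?thesis by auto
    next
      case False
      then have "h ! s = S'" using nth a by auto
      moreover have "h0 ! t \<subseteq> ks ` {..<t}" using IH by blast
      moreover have "ks ` {..<t} \<subseteq> ks ` {..<Suc t}" "ks t \<in> ks ` {..<Suc t}" by auto
      ultimately show ?thesis using lst S'(3) by blast
    qed
  qed
qed

lemma map_pmf_const_on: "(\<And>x. x \<in> set_pmf M \<Longrightarrow> g x = c) \<Longrightarrow> map_pmf g M = return_pmf c"
proof -
  assume "\<And>x. x \<in> set_pmf M \<Longrightarrow> g x = c"
  then have "map_pmf g M = map_pmf (\<lambda>_. c) M" by (intro map_pmf_cong) auto
  then show ?thesis by (simp add: map_pmf_const)
qed

lemma hist_prefix:
  assumes "s \<le> t"
  shows "map_pmf (take (Suc s)) (hist phi ks t) = hist phi ks s"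
  using assms
proof (induction t rule: dec_induct)
  case base
  have "map_pmf (take (Suc s)) (hist phi ks s) = map_pmf id (hist phi ks s)"
    by (intro map_pmf_cong) (auto dest: hist_supp)
  then show ?case by simp
next
  case (step t)
  have "map_pmf (take (Suc s)) (hist phi ks (Suc t)) =
        bind_pmf (hist phi ks t) (\<lambda>h. map_pmf (take (Suc s)) (stp phi ks t h))"
    by (simp add: hist_Suc map_bind_pmf)
  also have "\<dots> = bind_pmf (hist phi ks t) (\<lambda>h. return_pmf (take (Suc s) h))"
  proof (intro bind_pmf_cong refl map_pmf_const_on)
    fix h h' assume h: "h \<in> set_pmf (hist phi ks t)" and h': "h' \<in> set_pmf (stp phi ks t h)"
    from stp_set[OF h'] obtain S' where "h' = h @ [S']" by blast
    moreover have "length h = Suc t" using hist_supp[OF h] by simp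
    ultimately show "take (Suc s) h' = take (Suc s) h" using step by simp
  qed
  also have "\<dots> = map_pmf (take (Suc s)) (hist phi ks t)" by (simp add: map_pmf_def)
  finally show ?case using step by simp
qed

definition prj :: "nat set \<Rightarrow> nat set list \<Rightarrow> nat set list" where
  "prj L h = map (\<lambda>S. S \<inter> L) h"
definition seqp :: "(nat \<Rightarrow> nat) \<Rightarrow> nat \<Rightarrow> nat \<Rightarrow> nat set list \<Rightarrow> nat set list" where
  "seqp ks j t p = map (\<lambda>s. p ! s) (filter (\<lambda>s. ks s = j) [0..<t])"

lemma prj_append[simp]: "prj L (h @ [S]) = prj L h @ [S \<inter> L]" by (simp add: prj_def)
lemma prj_prj[simp]: "prj L (prj L h) = prj L h" by (simp add: prj_def)
lemma last_prj[simp]: "h \<noteq> [] \<Longrightarrow> last (prj L h) = last h \<inter> L" by (simp add: prj_def last_map)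
lemma length_prj[simp]: "length (prj L h) = length h" by (simp add: prj_def)
lemma nth_prj[simp]: "s < length h \<Longrightarrow> prj L h ! s = h ! s \<inter> L" by (simp add: prj_def)

lemma stp_proj:
  assumes "ks t \<noteq> j" "ks t \<ge> 1" "length h = Suc t"
  shows "map_pmf (prj {1..<j}) (stp phi ks t h) = map_pmf (prj {1..<j}) (stp phi ks t (prj {1..<j} h))"
proof -
  define L where "L = {1..<j}"
  define i where "i = ks t"
  have hne: "h \<noteq> []" using assms by auto
  show ?thesis
  proof (cases "i < j")
    case True
    have iL: "i \<in> L" using True assms unfolding L_def i_def by auto
    have mem: "i \<in> last (prj L h) \<longleftrightarrow> i \<in> last h" using iL hne by simp
    have sub: "{1..<i} \<subseteq> L" using True unfolding L_def by auto
    have xs: "concat (map (\<lambda>s. if ks s = i then [prj L h ! s \<inter> {1..<i}] else []) [0..<Suc t])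
            = concat (map (\<lambda>s. if ks s = i then [h ! s \<inter> {1..<i}] else []) [0..<Suc t])"
      using sub assms(3) by (intro arg_cong[where f=concat] map_cong) auto
    show ?thesis
    proof (cases "i \<in> last h")
      case True
      then show ?thesis using mem hne unfolding stp_def Let_def L_def[symmetric] i_def[symmetric]
        by simp
    next
      case False
      have ins: "\<And>S. insert i (S \<inter> L) \<inter> L = insert i S \<inter> L" using iL by auto
      show ?thesis using False mem hne unfolding stp_def Let_def L_def[symmetric] i_def[symmetric] xs
        by (simp add: map_pmf_comp ins if_distrib[of "\<lambda>S. S \<inter> L"] del: upt_Suc cong: if_cong)
    qed
  next
    case False
    then have iL: "i \<notin> L" unfolding L_def by auto
    have "map_pmf (prj L) (stp phi ks t x) = return_pmf (prj L x @ [last x \<inter> L])" if "x \<noteq> []" for x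
    proof (rule map_pmf_const_on)
      fix y assume "y \<in> set_pmf (stp phi ks t x)"
      from stp_set[OF this] obtain S' where "y = x @ [S']" "last x \<subseteq> S'" "S' \<subseteq> insert i (last x)"
        unfolding i_def by blast
      then show "prj L y = prj L x @ [last x \<inter> L]" using iL by auto
    qed
    then show ?thesis using hne unfolding L_def[symmetric]
      by (simp add: prj_def last_map)
  qed
qed

lemma seqp_snoc_other:
  assumes "ks t \<noteq> j" "length p = Suc t"
  shows "seqp ks j (Suc t) (p @ [x]) = seqp ks j t p"
  using assms unfolding seqp_def by (auto simp: nth_append intro!: map_cong)

lemma seqp_snoc_same:
  assumes "ks t = j" "length p = Suc t"
  shows "seqp ks j (Suc t) (p @ [x]) = seqp ks j t p @ [last p]"
proof -
  have "last p = p ! t" using assms(2) by (metis diff_Suc_1 last_conv_nth list.size(3) nat.distinct(1))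
  then show ?thesis using assms unfolding seqp_def by (auto simp: nth_append intro!: map_cong)
qed

lemma set_seqp: "length p = Suc t \<Longrightarrow> set (seqp ks j t p) \<subseteq> set p"
  unfolding seqp_def by auto

lemma stp_other:
  assumes "ks t \<noteq> j" "h' \<in> set_pmf (stp phi ks t h)" "length h = Suc t"
  shows "(j \<in> last h' \<longleftrightarrow> j \<in> last h) \<and> seqp ks j (Suc t) (prj L h') = seqp ks j t (prj L h)"
proof -
  from stp_set[OF assms(2)] obtain S' where S': "h' = h @ [S']" "last h \<subseteq> S'" "S' \<subseteq> insert (ks t) (last h)"
    by blast
  then show ?thesis using assms seqp_snoc_other[of ks t j "prj L h"] by auto
qed

lemma phi_facts:
  assumes rng: "\<And>xs. valid_seq j xs \<Longrightarrow> 0 \<le> phi j xs \<and> phi j xs \<le> 1"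
    and mono: "\<And>xs ys. valid_seq j xs \<Longrightarrow> valid_seq j ys \<Longrightarrow> subseq ys xs \<Longrightarrow> phi j ys \<le> phi j xs"
    and a: "set a \<subseteq> Pow {1..<j}" and x: "x \<subseteq> {1..<j}"
  shows "0 \<le> phi0 phi j a" "phi0 phi j a \<le> phi j (a @ [x])" "phi j (a @ [x]) \<le> 1"
proof -
  have vc: "valid_seq j (a @ [x])" using a x by (auto simp: valid_seq_def)
  show "phi j (a @ [x]) \<le> 1" using rng[OF vc] by simp
  show "0 \<le> phi0 phi j a"
  proof (cases "a = []")
    case False
    then have "valid_seq j a" using a by (auto simp: valid_seq_def)
    then show ?thesis using rng by (simp add: phi0_def False)
  qed (simp add: phi0_def)
  show "phi0 phi j a \<le> phi j (a @ [x])"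
  proof (cases "a = []")
    case False
    then have va: "valid_seq j a" using a by (auto simp: valid_seq_def)
    have "subseq a (a @ [x])" using subseq_append'[of a "[]" "[x]"] by simp
    then show ?thesis using mono[OF vc va] by (simp add: phi0_def False)
  next
    case True
    then show ?thesis using rng[OF vc] by (simp add: phi0_def)
  qed
qed

lemma nn_integral_pmf_const: "(\<integral>\<^sup>+x. c \<partial>measure_pmf M) = c"
  by (simp add: measure_pmf.emeasure_space_1)

lemma seqp_Suc_same:
  assumes "ks t = j" "length p = Suc t"
  shows "seqp ks j (Suc t) p = seqp ks j t p @ [last p]"
proof -
  have "last p = p ! t" using assms(2) by (metis diff_Suc_1 last_conv_nth list.size(3) nat.distinct(1))
  then show ?thesis using assms unfolding seqp_def by auto
qed

lemma stp_same:
  assumes "ks t = j" "length h = Suc t"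
  shows "stp phi ks t h = (if j \<in> last h then return_pmf (h @ [last h]) else
     map_pmf (\<lambda>b. h @ [if b then insert j (last h) else last h])
      (bernoulli_pmf ((phi j (seqp ks j t (prj {1..<j} h) @ [last (prj {1..<j} h)]) - phi0 phi j (seqp ks j t (prj {1..<j} h)))
          / (1 - phi0 phi j (seqp ks j t (prj {1..<j} h))))))"
proof -
  have "concat (map (\<lambda>s. if ks s = j then [h ! s \<inter> {1..<j}] else []) [0..<Suc t])
      = seqp ks j (Suc t) (prj {1..<j} h)"
    unfolding comp_eq seqp_def using assms(2) by (auto intro!: map_cong)
  also have "\<dots> = seqp ks j t (prj {1..<j} h) @ [last (prj {1..<j} h)]"
    by (rule seqp_Suc_same) (use assms in auto)
  finally have xs: "concat (map (\<lambda>s. if ks s = j then [h ! s \<inter> {1..<j}] else []) [0..<Suc t])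
      = seqp ks j t (prj {1..<j} h) @ [last (prj {1..<j} h)]" .
  show ?thesis unfolding stp_def Let_def assms(1) xs by simp
qed

lemma key:
  fixes j :: nat and f :: "nat set list \<Rightarrow> ennreal"
  assumes rng: "\<And>xs. valid_seq j xs \<Longrightarrow> 0 \<le> phi j xs \<and> phi j xs \<le> 1"
    and mono: "\<And>xs ys. valid_seq j xs \<Longrightarrow> valid_seq j ys \<Longrightarrow> subseq ys xs \<Longrightarrow> phi j ys \<le> phi j xs"
    and ks1: "\<And>t. ks t \<ge> 1"
  shows "(\<integral>\<^sup>+h. f (prj {1..<j} h) * indicator {h. j \<notin> last h} h \<partial>hist phi ks t)
       = (\<integral>\<^sup>+h. f (prj {1..<j} h) * ennreal (1 - phi0 phi j (seqp ks j t (prj {1..<j} h))) \<partial>hist phi ks t)"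
proof (induction t arbitrary: f)
  case 0
  show ?case by (simp add: seqp_def phi0_def)
next
  case (Suc t)
  define L where "L = {1..<j}"
  note IH = Suc.IH[unfolded L_def[symmetric]]
  show ?case unfolding L_def[symmetric]
  proof (cases "ks t = j")
    case False
    define \<Phi> where "\<Phi> p = (\<integral>\<^sup>+p'. f p' \<partial>map_pmf (prj L) (stp phi ks t p))" for p
    have inner: "(\<integral>\<^sup>+h'. f (prj L h') * g h' \<partial>stp phi ks t h) = \<Phi> (prj L h) * c"
      if h: "h \<in> set_pmf (hist phi ks t)" and g: "\<And>h'. h' \<in> set_pmf (stp phi ks t h) \<Longrightarrow> g h' = c"
      for h g c
    proof -
      have len: "length h = Suc t" using hist_supp[OF h] by simp
      have "(\<integral>\<^sup>+h'. f (prj L h') * g h' \<partial>stp phi ks t h) = (\<integral>\<^sup>+h'. f (prj L h') * c \<partial>stp phi ks t h)"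
        using g by (intro nn_integral_cong_AE) (auto simp: AE_measure_pmf_iff)
      also have "\<dots> = (\<integral>\<^sup>+h'. f (prj L h') \<partial>stp phi ks t h) * c"
        by (rule nn_integral_multc) simp
      also have "(\<integral>\<^sup>+h'. f (prj L h') \<partial>stp phi ks t h) = (\<integral>\<^sup>+p'. f p' \<partial>map_pmf (prj L) (stp phi ks t h))"
        by simp
      also have "map_pmf (prj L) (stp phi ks t h) = map_pmf (prj L) (stp phi ks t (prj L h))"
        unfolding L_def by (rule stp_proj[of ks t j, OF False ks1 len])
      finally show ?thesis unfolding \<Phi>_def .
    qed
    have "(\<integral>\<^sup>+h. f (prj L h) * indicator {h. j \<notin> last h} h \<partial>hist phi ks (Suc t))
        = (\<integral>\<^sup>+h. \<Phi> (prj L h) * indicator {h. j \<notin> last h} h \<partial>hist phi ks t)"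
      unfolding hist_Suc nn_integral_bind_pmf
    proof (intro nn_integral_cong_AE, simp add: AE_measure_pmf_iff, intro ballI)
      fix h assume h: "h \<in> set_pmf (hist phi ks t)"
      show "(\<integral>\<^sup>+h'. f (prj L h') * indicator {h. j \<notin> last h} h' \<partial>stp phi ks t h)
          = \<Phi> (prj L h) * indicator {h. j \<notin> last h} h"
        using stp_other[where ks=ks and t=t and j=j and h=h and phi=phi and L=L, OF False _ conjunct1[OF hist_supp[OF h]]]
        by (intro inner[OF h]) (auto split: split_indicator)
    qed
    also have "\<dots> = (\<integral>\<^sup>+h. \<Phi> (prj L h) * ennreal (1 - phi0 phi j (seqp ks j t (prj L h))) \<partial>hist phi ks t)"
      by (rule IH)
    also have "\<dots> = (\<integral>\<^sup>+h. f (prj L h) * ennreal (1 - phi0 phi j (seqp ks j (Suc t) (prj L h))) \<partial>hist phi ks (Suc t))"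
      unfolding hist_Suc nn_integral_bind_pmf
    proof (intro nn_integral_cong_AE, simp add: AE_measure_pmf_iff, intro ballI)
      fix h assume h: "h \<in> set_pmf (hist phi ks t)"
      show "\<Phi> (prj L h) * ennreal (1 - phi0 phi j (seqp ks j t (prj L h)))
          = (\<integral>\<^sup>+h'. f (prj L h') * ennreal (1 - phi0 phi j (seqp ks j (Suc t) (prj L h'))) \<partial>stp phi ks t h)"
        using stp_other[where ks=ks and t=t and j=j and h=h and phi=phi and L=L, OF False _ conjunct1[OF hist_supp[OF h]]]
        by (intro inner[OF h, symmetric]) auto
    qed
    finally show "(\<integral>\<^sup>+h. f (prj L h) * indicator {h. j \<notin> last h} h \<partial>hist phi ks (Suc t))
       = (\<integral>\<^sup>+h. f (prj L h) * ennreal (1 - phi0 phi j (seqp ks j (Suc t) (prj L h))) \<partial>hist phi ks (Suc t))" .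
  next
    case True
    show "(\<integral>\<^sup>+h. f (prj L h) * indicator {h. j \<notin> last h} h \<partial>hist phi ks (Suc t))
       = (\<integral>\<^sup>+h. f (prj L h) * ennreal (1 - phi0 phi j (seqp ks j (Suc t) (prj L h))) \<partial>hist phi ks (Suc t))"
    proof -
      define a where "a p = seqp ks j t p" for p
      define cur where "cur p = phi j (a p @ [last p])" for p
      define prev where "prev p = phi0 phi j (a p)" for p
      define qf where "qf p = (cur p - prev p) / (1 - prev p)" for p
      define \<Phi> where "\<Phi> p = f (p @ [last p]) * ennreal (1 - qf p)" for p
      have facts: "0 \<le> prev (prj L h) \<and> prev (prj L h) \<le> cur (prj L h) \<and> cur (prj L h) \<le> 1
          \<and> 0 \<le> qf (prj L h) \<and> qf (prj L h) \<le> 1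
          \<and> ennreal (1 - qf (prj L h)) * ennreal (1 - prev (prj L h)) = ennreal (1 - cur (prj L h))"
        if h: "h \<in> set_pmf (hist phi ks t)" for h
      proof -
        have len: "length h = Suc t" using hist_supp[OF h] by simp
        define p where "p = prj L h"
        have lp: "length p = Suc t" using len by (simp add: p_def)
        have sp: "set p \<subseteq> Pow {1..<j}" unfolding p_def prj_def L_def by auto
        have sa: "set (a p) \<subseteq> Pow {1..<j}" using set_seqp[OF lp, of ks j] sp unfolding a_def by auto
        have sl: "last p \<subseteq> {1..<j}" using sp lp by (metis PowD in_mono last_in_set list.size(3) nat.distinct(1))
        note pf = phi_facts[where phi=phi and j=j, OF rng mono sa sl]
        have A: "0 \<le> prev p" "prev p \<le> cur p" "cur p \<le> 1" using pf unfolding prev_def cur_def by auto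
        have B: "0 \<le> qf p \<and> qf p \<le> 1 \<and> (1 - qf p) * (1 - prev p) = 1 - cur p"
        proof (cases "prev p = 1")
          case True
          then have "cur p = 1" using A by auto
          then show ?thesis using True unfolding qf_def by simp
        next
          case False
          then have "prev p < 1" using A by auto
          then show ?thesis using A unfolding qf_def by (auto simp: field_simps)
        qed
        have "ennreal (1 - qf p) * ennreal (1 - prev p) = ennreal ((1 - qf p) * (1 - prev p))"
          using A B by (subst ennreal_mult) auto
        then show ?thesis using A B unfolding p_def by simp
      qed
      have "(\<integral>\<^sup>+h. f (prj L h) * indicator {h. j \<notin> last h} h \<partial>hist phi ks (Suc t))
          = (\<integral>\<^sup>+h. \<Phi> (prj L h) * indicator {h. j \<notin> last h} h \<partial>hist phi ks t)"
        unfolding hist_Suc nn_integral_bind_pmf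
      proof (intro nn_integral_cong_AE, simp add: AE_measure_pmf_iff, intro ballI)
        fix h assume h: "h \<in> set_pmf (hist phi ks t)"
        have len: "length h = Suc t" using hist_supp[OF h] by simp
        have hne: "h \<noteq> []" using len by auto
        have jL: "j \<notin> L" unfolding L_def by auto
        note st = stp_same[where ks=ks and t=t and j=j and h=h and phi=phi, OF True len, unfolded L_def[symmetric]]
        show "(\<integral>\<^sup>+h'. f (prj L h') * indicator {h. j \<notin> last h} h' \<partial>stp phi ks t h)
          = \<Phi> (prj L h) * indicator {h. j \<notin> last h} h"
        proof (cases "j \<in> last h")
          case True
          then show ?thesis unfolding st by simp
        next
          case False
          have q: "0 \<le> qf (prj L h)" "qf (prj L h) \<le> 1" using facts[OF h] by auto
          have ins: "insert j (last h) \<inter> L = last h \<inter> L" using jL by auto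
          show ?thesis using False q hne unfolding st
            by (simp add: ins \<Phi>_def qf_def cur_def prev_def a_def)
        qed
      qed
      also have "\<dots> = (\<integral>\<^sup>+h. \<Phi> (prj L h) * ennreal (1 - phi0 phi j (seqp ks j t (prj L h))) \<partial>hist phi ks t)"
        by (rule IH)
      also have "\<dots> = (\<integral>\<^sup>+h. f (prj L h) * ennreal (1 - phi0 phi j (seqp ks j (Suc t) (prj L h))) \<partial>hist phi ks (Suc t))"
        unfolding hist_Suc nn_integral_bind_pmf
      proof (intro nn_integral_cong_AE, simp add: AE_measure_pmf_iff, intro ballI)
        fix h assume h: "h \<in> set_pmf (hist phi ks t)"
        have len: "length h = Suc t" using hist_supp[OF h] by simp
        have hne: "h \<noteq> []" using len by auto
        have jL: "j \<notin> L" unfolding L_def by auto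
        have "(\<integral>\<^sup>+h'. f (prj L h') * ennreal (1 - phi0 phi j (seqp ks j (Suc t) (prj L h'))) \<partial>stp phi ks t h)
           = (\<integral>\<^sup>+h'. f (prj L h @ [last (prj L h)]) * ennreal (1 - cur (prj L h)) \<partial>stp phi ks t h)"
        proof (intro nn_integral_cong_AE, simp add: AE_measure_pmf_iff, intro ballI)
          fix h' assume h': "h' \<in> set_pmf (stp phi ks t h)"
          from stp_set[OF h'] obtain S' where S': "h' = h @ [S']" "last h \<subseteq> S'" "S' \<subseteq> insert (ks t) (last h)"
            by blast
          have SL: "S' \<inter> L = last h \<inter> L" using S' True jL by auto
          have "seqp ks j (Suc t) (prj L h') = a (prj L h) @ [last (prj L h)]"
            unfolding S' prj_append a_def SL using hne
            by (subst seqp_snoc_same[where ks=ks and t=t and j=j, OF True]) (use len in auto)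
          then show "f (prj L h') * ennreal (1 - phi0 phi j (seqp ks j (Suc t) (prj L h')))
              = f (prj L h @ [last (prj L h)]) * ennreal (1 - cur (prj L h))"
            using S' SL hne by (simp add: phi0_def cur_def)
        qed
        also have "\<dots> = f (prj L h @ [last (prj L h)]) * ennreal (1 - cur (prj L h))"
          by (rule nn_integral_pmf_const)
        also have "\<dots> = \<Phi> (prj L h) * ennreal (1 - phi0 phi j (seqp ks j t (prj L h)))"
          using facts[OF h] unfolding \<Phi>_def prev_def a_def by (simp add: mult.assoc)
        finally show "\<Phi> (prj L h) * ennreal (1 - phi0 phi j (seqp ks j t (prj L h)))
          = (\<integral>\<^sup>+h'. f (prj L h') * ennreal (1 - phi0 phi j (seqp ks j (Suc t) (prj L h'))) \<partial>stp phi ks t h)"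
          by simp
      qed
      finally show ?thesis .
    qed
  qed
qed


lemma count_block:
  assumes "1 \<le> j" "j \<le> d"
  shows "set (filter (\<lambda>s. s mod d + 1 = j) [k*d..<k*d+d]) = {k*d + (j - 1)}"
proof (intro set_eqI iffI)
  fix s assume "s \<in> set (filter (\<lambda>s. s mod d + 1 = j) [k*d..<k*d+d])"
  then have s: "k*d \<le> s" "s < k*d + d" "s mod d = j - 1" by auto
  define m where "m = s - k*d"
  have sm: "s = k*d + m" "m < d" using s unfolding m_def by auto
  then have "s mod d = m" by simp
  then show "s \<in> {k*d + (j - 1)}" using s sm by simp
next
  fix s assume "s \<in> {k*d + (j - 1)}"
  define m where "m = j - 1"
  have jm: "j = m + 1" using assms unfolding m_def by simp
  have md: "m < d" using assms unfolding m_def by simp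
  have "s = k*d + m" using \<open>s \<in> {k*d + (j - 1)}\<close> unfolding m_def by simp
  moreover have "(k*d + m) mod d = m" using md by simp
  ultimately show "s \<in> set (filter (\<lambda>s. s mod d + 1 = j) [k*d..<k*d+d])" using md jm by simp
qed

lemma count_filter:
  assumes "1 \<le> j" "j \<le> d" "r \<le> k"
  shows "length (filter (\<lambda>s. s mod d + 1 = j) [r*d..<k*d]) = k - r"
  using assms(3)
proof (induction k rule: dec_induct)
  case base
  then show ?case by simp
next
  case (step k)
  have "[r*d..<Suc k*d] = [r*d..<k*d] @ [k*d..<k*d+d]"
    using step by (metis add.commute mult_Suc mult_le_mono1 le_add2 upt_add_eq_append)
  moreover have "length (filter (\<lambda>s. s mod d + 1 = j) [k*d..<k*d+d]) = 1"
  proof -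
    have "length (filter (\<lambda>s. s mod d + 1 = j) [k*d..<k*d+d]) = card (set (filter (\<lambda>s. s mod d + 1 = j) [k*d..<k*d+d]))"
      by (rule distinct_card[symmetric]) simp
    then show ?thesis using count_block[OF assms(1,2)] by simp
  qed
  ultimately show ?case using step by simp
qed

lemma ptw:
  assumes rng: "\<And>xs. valid_seq j xs \<Longrightarrow> 0 \<le> phi j xs \<and> phi j xs \<le> 1"
    and mono: "\<And>xs ys. valid_seq j xs \<Longrightarrow> valid_seq j ys \<Longrightarrow> subseq ys xs \<Longrightarrow> phi j ys \<le> phi j xs"
    and j: "1 \<le> j" "j \<le> d"
    and h: "h \<in> set_pmf (hist phi (\<lambda>t. t mod d + 1) (k*d))"
    and Lh: "{1..<j} \<subseteq> last h"
  shows "1 - phi0 phi j (seqp (\<lambda>t. t mod d + 1) j (k*d) (prj {1..<j} h))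
     \<le> fund phi j (k - (LEAST r. r \<le> k \<and> {1..<j} \<subseteq> h ! (r*d)))"
proof -
  define L where "L = {1..<j}"
  define ks where "ks = (\<lambda>t::nat. t mod d + 1)"
  define r0 where "r0 = (LEAST r. r \<le> k \<and> L \<subseteq> h ! (r*d))"
  note hs = hist_supp[OF h[folded ks_def]]
  have len: "length h = Suc (k*d)" using hs by simp
  have lst: "last h = h ! (k*d)" using len by (metis diff_Suc_1 last_conv_nth list.size(3) nat.distinct(1))
  have ex: "k \<le> k \<and> L \<subseteq> h ! (k*d)" using Lh lst unfolding L_def by simp
  have r0: "r0 \<le> k" "L \<subseteq> h ! (r0*d)" using LeastI[of "\<lambda>r. r \<le> k \<and> L \<subseteq> h ! (r*d)", OF ex]
    unfolding r0_def by auto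
  define p where "p = prj L h"
  have lp: "length p = Suc (k*d)" using len by (simp add: p_def)
  have sp: "set p \<subseteq> Pow {1..<j}" unfolding p_def prj_def L_def by auto
  define P where "P = (\<lambda>s. ks s = j)"
  have r0d: "r0 * d \<le> k * d" using r0 by simp
  have split: "[0..<k*d] = [0..<r0*d] @ [r0*d..<k*d]"
    using upt_add_eq_append[of 0 "r0*d" "k*d - r0*d"] r0d by simp
  define X where "X = map (\<lambda>s. p ! s) (filter P [0..<r0*d])"
  define Y where "Y = map (\<lambda>s. p ! s) (filter P [r0*d..<k*d])"
  have sq: "seqp ks j (k*d) p = X @ Y" unfolding seqp_def X_def Y_def P_def split by simp
  have "Y = map (\<lambda>s. L) (filter P [r0*d..<k*d])"
    unfolding Y_def
  proof (rule map_cong[OF refl])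
    fix s assume "s \<in> set (filter P [r0*d..<k*d])"
    then have s: "r0*d \<le> s" "s < k*d" by auto
    have "h ! (r0*d) \<subseteq> h ! s" using hs s by auto
    then show "p ! s = L" using r0(2) s len unfolding p_def by auto
  qed
  also have "\<dots> = replicate (k - r0) L"
    unfolding map_replicate_const P_def ks_def using count_filter[OF j r0(1)] by simp
  finally have Y: "Y = replicate (k - r0) L" .
  have ssq: "set (seqp ks j (k*d) p) \<subseteq> Pow {1..<j}" using set_seqp[OF lp, of ks j] sp by auto
  have nn: "0 \<le> phi0 phi j (seqp ks j (k*d) p)"
    using phi_facts(1)[where phi=phi and j=j, OF rng mono ssq, of "{}"] by simp
  have "1 - phi0 phi j (seqp ks j (k*d) p) \<le> fund phi j (k - r0)"
  proof (cases "r0 = k")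
    case True
    then show ?thesis using nn unfolding fund_def by simp
  next
    case False
    then have n: "k - r0 \<noteq> 0" using r0 by auto
    have ne: "seqp ks j (k*d) p \<noteq> []" using sq Y n by simp
    have v1: "valid_seq j (seqp ks j (k*d) p)" using ne ssq by (simp add: valid_seq_def)
    have v2: "valid_seq j (replicate (k - r0) L)" using n unfolding valid_seq_def L_def by auto
    have "subseq Y (seqp ks j (k*d) p)" unfolding sq by (rule suffix_imp_subseq) (simp add: suffix_def)
    then have "phi j (replicate (k - r0) L) \<le> phi j (seqp ks j (k*d) p)"
      using mono[OF v1 v2] Y by simp
    then show ?thesis using n ne unfolding fund_def phi0_def L_def by simp
  qed
  then show ?thesis unfolding ks_def p_def L_def r0_def .
qed

lemma fund_nonneg:
  assumes rng: "\<And>xs. valid_seq j xs \<Longrightarrow> 0 \<le> phi j xs \<and> phi j xs \<le> 1"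
  shows "0 \<le> fund phi j n"
proof (cases "n = 0")
  case False
  then have "valid_seq j (replicate n {1..<j})" by (auto simp: valid_seq_def)
  then show ?thesis using rng False by (simp add: fund_def)
qed (simp add: fund_def)

lemma sum_shift_le:
  assumes nn: "\<And>n. 0 \<le> (f::nat \<Rightarrow> real) n" and sm: "summable f"
  shows "(\<Sum>k<K. if r0 \<le> k then f (k - r0) else 0) \<le> suminf f"
proof -
  have "(\<Sum>k<K. if r0 \<le> k then f (k - r0) else 0) = (\<Sum>m<K - r0. f m)"
  proof (induction K)
    case (Suc K)
    then show ?case
      by (cases "r0 \<le> K") (auto simp: Suc_diff_le)
  qed simp
  also have "\<dots> \<le> suminf f" using sum_le_suminf[OF sm] nn by auto
  finally show ?thesis .
qed

lemma door_bound:
  assumes rng: "\<And>xs. valid_seq j xs \<Longrightarrow> 0 \<le> phi j xs \<and> phi j xs \<le> 1"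
    and mono: "\<And>xs ys. valid_seq j xs \<Longrightarrow> valid_seq j ys \<Longrightarrow> subseq ys xs \<Longrightarrow> phi j ys \<le> phi j xs"
    and sm: "summable (fund phi j)"
    and j: "1 \<le> j" "j \<le> d"
  shows "(\<Sum>k<K. emeasure (hist phi (\<lambda>t. t mod d + 1) (k*d)) {h. {1..<j} \<subseteq> last h \<and> j \<notin> last h})
     \<le> ennreal (E_door phi j)"
proof -
  define ks where "ks = (\<lambda>t::nat. t mod d + 1)"
  define L where "L = {1..<j}"
  define g where "g k h = (if \<exists>r\<le>k. L \<subseteq> h ! (r*d) then fund phi j (k - (LEAST r. r \<le> k \<and> L \<subseteq> h ! (r*d))) else 0)" for k h
  define f where "f p = (if L \<subseteq> last p then 1 else 0 :: ennreal)" for p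
  have ks1: "\<And>t. 1 \<le> ks t" unfolding ks_def by simp
  have gnn: "0 \<le> g k h" for k h unfolding g_def using fund_nonneg[where phi=phi and j=j, OF rng] by simp
  have step1: "emeasure (hist phi ks (k*d)) {h. L \<subseteq> last h \<and> j \<notin> last h} \<le> (\<integral>\<^sup>+h. ennreal (g k h) \<partial>hist phi ks (k*d))" for k
  proof -
    have "emeasure (hist phi ks (k*d)) {h. L \<subseteq> last h \<and> j \<notin> last h}
        = (\<integral>\<^sup>+h. indicator {h. L \<subseteq> last h \<and> j \<notin> last h} h \<partial>hist phi ks (k*d))"
      by (rule nn_integral_indicator[symmetric]) simp
    also have "\<dots> = (\<integral>\<^sup>+h. f (prj L h) * indicator {h. j \<notin> last h} h \<partial>hist phi ks (k*d))"
    proof (intro nn_integral_cong_AE, simp add: AE_measure_pmf_iff, intro ballI)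
      fix h assume h: "h \<in> set_pmf (hist phi ks (k*d))"
      then have "h \<noteq> []" using hist_supp[OF h] by auto
      then show "indicator {h. L \<subseteq> last h \<and> j \<notin> last h} h = f (prj L h) * indicator {h. j \<notin> last h} h"
        unfolding f_def by (auto split: split_indicator)
    qed
    also have "\<dots> = (\<integral>\<^sup>+h. f (prj L h) * ennreal (1 - phi0 phi j (seqp ks j (k*d) (prj L h))) \<partial>hist phi ks (k*d))"
      unfolding L_def by (rule key[where phi=phi and j=j, OF rng mono ks1])
    also have "\<dots> \<le> (\<integral>\<^sup>+h. ennreal (g k h) \<partial>hist phi ks (k*d))"
    proof (intro nn_integral_mono_AE, simp add: AE_measure_pmf_iff, intro ballI)
      fix h assume h: "h \<in> set_pmf (hist phi ks (k*d))"
      have hne: "h \<noteq> []" using hist_supp[OF h] by auto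
      show "f (prj L h) * ennreal (1 - phi0 phi j (seqp ks j (k*d) (prj L h))) \<le> ennreal (g k h)"
      proof (cases "L \<subseteq> last h")
        case True
        have lst: "last h = h ! (k*d)" using hist_supp[OF h]
          by (metis diff_Suc_1 last_conv_nth list.size(3) nat.distinct(1))
        have ex: "\<exists>r\<le>k. L \<subseteq> h ! (r*d)" using True lst by auto
        have "1 - phi0 phi j (seqp ks j (k*d) (prj L h)) \<le> g k h"
          using ptw[where phi=phi and j=j, OF rng mono j h[unfolded ks_def] True[unfolded L_def]] ex
          unfolding g_def ks_def L_def by simp
        then show ?thesis using True hne unfolding f_def by (simp add: ennreal_leI)
      next
        case False
        then show ?thesis using hne unfolding f_def by simp
      qed
    qed
    finally show ?thesis .
  qed
  have step2: "(\<integral>\<^sup>+h. ennreal (g k h) \<partial>hist phi ks (k*d)) = (\<integral>\<^sup>+h. ennreal (g k h) \<partial>hist phi ks (K*d))"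
    if "k < K" for k
  proof -
    have "hist phi ks (k*d) = map_pmf (take (Suc (k*d))) (hist phi ks (K*d))"
      using that by (intro hist_prefix[symmetric]) simp
    then have "(\<integral>\<^sup>+h. ennreal (g k h) \<partial>hist phi ks (k*d)) = (\<integral>\<^sup>+h. ennreal (g k (take (Suc (k*d)) h)) \<partial>hist phi ks (K*d))"
      by simp
    also have "\<dots> = (\<integral>\<^sup>+h. ennreal (g k h) \<partial>hist phi ks (K*d))"
    proof (intro nn_integral_cong_AE, simp add: AE_measure_pmf_iff, intro ballI)
      fix h assume h: "h \<in> set_pmf (hist phi ks (K*d))"
      have len: "length h = Suc (K*d)" using hist_supp[OF h] by simp
      have eq: "take (Suc (k*d)) h ! (r*d) = h ! (r*d)" if "r \<le> k" for r
      proof -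
        have "r*d \<le> k*d" using that by (rule mult_le_mono1)
        then have "r*d < Suc (k*d)" by (rule le_imp_less_Suc)
        then show ?thesis by (rule nth_take)
      qed
      have A: "(\<lambda>r. r \<le> k \<and> L \<subseteq> take (Suc (k*d)) h ! (r*d)) = (\<lambda>r. r \<le> k \<and> L \<subseteq> h ! (r*d))"
        using eq by auto
      have B: "(\<exists>r\<le>k. L \<subseteq> take (Suc (k*d)) h ! (r*d)) = (\<exists>r\<le>k. L \<subseteq> h ! (r*d))"
        using eq by auto
      show "ennreal (g k (take (Suc (k*d)) h)) = ennreal (g k h)"
        unfolding g_def A B by (rule refl)
    qed
    finally show ?thesis .
  qed
  have step3: "(\<Sum>k<K. g k h) \<le> E_door phi j" for h
  proof (cases "\<exists>r. L \<subseteq> h ! (r*d)")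
    case True
    define r0 where "r0 = (LEAST r. L \<subseteq> h ! (r*d))"
    have r0: "L \<subseteq> h ! (r0*d)" using LeastI_ex[OF True] unfolding r0_def .
    have "g k h = (if r0 \<le> k then fund phi j (k - r0) else 0)" for k
    proof (cases "r0 \<le> k")
      case True
      have "(LEAST r. r \<le> k \<and> L \<subseteq> h ! (r*d)) = r0"
      proof (rule Least_equality)
        show "r0 \<le> k \<and> L \<subseteq> h ! (r0*d)" using True r0 by simp
        show "\<And>y. y \<le> k \<and> L \<subseteq> h ! (y*d) \<Longrightarrow> r0 \<le> y" unfolding r0_def by (simp add: Least_le)
      qed
      then show ?thesis using True r0 unfolding g_def by auto
    next
      case False
      have "\<not> (\<exists>r\<le>k. L \<subseteq> h ! (r*d))"
        using False not_less_Least[where P="\<lambda>r. L \<subseteq> h ! (r*d)"] unfolding r0_def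
        by (metis le_less_trans not_le)
      then show ?thesis using False unfolding g_def by auto
    qed
    then have "(\<Sum>k<K. g k h) = (\<Sum>k<K. if r0 \<le> k then fund phi j (k - r0) else 0)" by simp
    also have "\<dots> \<le> E_door phi j" unfolding E_door_def
      by (rule sum_shift_le[OF fund_nonneg[where phi=phi and j=j, OF rng] sm])
    finally show ?thesis .
  next
    case False
    then have "(\<Sum>k<K. g k h) = 0" unfolding g_def by auto
    moreover have "0 \<le> E_door phi j" unfolding E_door_def
      using suminf_nonneg[OF sm] fund_nonneg[where phi=phi and j=j, OF rng] by blast
    ultimately show ?thesis by simp
  qed
  have "(\<Sum>k<K. emeasure (hist phi ks (k*d)) {h. L \<subseteq> last h \<and> j \<notin> last h})
      \<le> (\<Sum>k<K. \<integral>\<^sup>+h. ennreal (g k h) \<partial>hist phi ks (K*d))"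
  proof (intro sum_mono)
    fix k assume "k \<in> {..<K}"
    then show "emeasure (hist phi ks (k*d)) {h. L \<subseteq> last h \<and> j \<notin> last h} \<le> (\<integral>\<^sup>+h. ennreal (g k h) \<partial>hist phi ks (K*d))"
      using step1[of k] step2[of k] by simp
  qed
  also have "\<dots> = (\<integral>\<^sup>+h. (\<Sum>k<K. ennreal (g k h)) \<partial>hist phi ks (K*d))"
    by (rule nn_integral_sum[symmetric]) simp
  also have "\<dots> \<le> (\<integral>\<^sup>+h. ennreal (E_door phi j) \<partial>hist phi ks (K*d))"
  proof (rule nn_integral_mono)
    fix h
    have "(\<Sum>k<K. ennreal (g k h)) = ennreal (\<Sum>k<K. g k h)" using gnn by (simp add: sum_ennreal)
    then show "(\<Sum>k<K. ennreal (g k h)) \<le> ennreal (E_door phi j)" using step3 by (simp add: ennreal_leI)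
  qed
  also have "\<dots> = ennreal (E_door phi j)" by (rule nn_integral_pmf_const)
  finally show ?thesis unfolding ks_def L_def .
qed


lemma all_doors:
  assumes cfg: "config d phi" and j: "1 \<le> j" "j \<le> Suc d"
  shows "(\<Sum>k<K. emeasure (hist phi (\<lambda>t. t mod d + 1) (k*d)) {h. \<not> {1..<j} \<subseteq> last h})
     \<le> ennreal (\<Sum>i\<in>{1..<j}. E_door phi i)"
  using j
proof (induction j)
  case 0
  then show ?case by simp
next
  case (Suc j)
  show ?case
  proof (cases "j = 0")
    case True
    then show ?thesis by simp
  next
    case False
    then have IH: "(\<Sum>k<K. emeasure (hist phi (\<lambda>t. t mod d + 1) (k*d)) {h. \<not> {1..<j} \<subseteq> last h})
     \<le> ennreal (\<Sum>i\<in>{1..<j}. E_door phi i)" using Suc by auto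
  define ks where "ks = (\<lambda>t::nat. t mod d + 1)"
  have jd: "1 \<le> j" "j \<le> d" using Suc False by auto
  have c: "\<forall>xs. valid_seq j xs \<longrightarrow> 0 \<le> phi j xs \<and> phi j xs \<le> 1"
      "\<forall>xs ys. valid_seq j xs \<and> valid_seq j ys \<and> subseq ys xs \<longrightarrow> phi j ys \<le> phi j xs"
      "summable (fund phi j)"
    using cfg jd unfolding config_def by auto
  have rng: "\<And>xs. valid_seq j xs \<Longrightarrow> 0 \<le> phi j xs \<and> phi j xs \<le> 1" using c(1) by blast
  have mono: "\<And>xs ys. valid_seq j xs \<Longrightarrow> valid_seq j ys \<Longrightarrow> subseq ys xs \<Longrightarrow> phi j ys \<le> phi j xs"
    using c(2) by blast
  have Enn: "0 \<le> E_door phi i" if "1 \<le> i" "i \<le> d" for i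
  proof -
    have "\<forall>xs. valid_seq i xs \<longrightarrow> 0 \<le> phi i xs \<and> phi i xs \<le> 1" "summable (fund phi i)"
      using cfg that unfolding config_def by auto
    then show ?thesis unfolding E_door_def
      using suminf_nonneg fund_nonneg[where phi=phi and j=i] by blast
  qed
  have split: "{h. \<not> {1..<Suc j} \<subseteq> last h} = {h. \<not> {1..<j} \<subseteq> last h} \<union> {h. {1..<j} \<subseteq> last h \<and> j \<notin> last h}"
    using jd by (auto simp: atLeastLessThanSuc)
  have "(\<Sum>k<K. emeasure (hist phi ks (k*d)) {h. \<not> {1..<Suc j} \<subseteq> last h})
      \<le> (\<Sum>k<K. emeasure (hist phi ks (k*d)) {h. \<not> {1..<j} \<subseteq> last h}
            + emeasure (hist phi ks (k*d)) {h. {1..<j} \<subseteq> last h \<and> j \<notin> last h})"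
    unfolding split by (intro sum_mono emeasure_subadditive) auto
  also have "\<dots> = (\<Sum>k<K. emeasure (hist phi ks (k*d)) {h. \<not> {1..<j} \<subseteq> last h})
       + (\<Sum>k<K. emeasure (hist phi ks (k*d)) {h. {1..<j} \<subseteq> last h \<and> j \<notin> last h})"
    by (rule sum.distrib)
  also have "\<dots> \<le> ennreal (\<Sum>i\<in>{1..<j}. E_door phi i) + ennreal (E_door phi j)"
    using IH door_bound[where phi=phi and j=j, OF rng mono c(3) jd] unfolding ks_def
    by (intro add_mono) auto
  also have "\<dots> = ennreal (\<Sum>i\<in>{1..<Suc j}. E_door phi i)"
  proof -
    have "(\<Sum>i\<in>{1..<Suc j}. E_door phi i) = (\<Sum>i\<in>{1..<j}. E_door phi i) + E_door phi j"
      using jd by (simp add: atLeastLessThanSuc)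
    moreover have "0 \<le> (\<Sum>i\<in>{1..<j}. E_door phi i)" using Enn jd by (intro sum_nonneg) auto
    ultimately show ?thesis using Enn[OF jd] by (simp add: ennreal_plus)
  qed
  finally show ?thesis unfolding ks_def .
  qed
qed

lemma group_sum:
  fixes F :: "nat \<Rightarrow> ennreal"
  assumes "0 < d"
  shows "(\<Sum>t<n*d. F (t div d * d)) = of_nat d * (\<Sum>k<n. F (k*d))"
proof -
  have "(\<Sum>t<n*d. F (t div d * d)) = (\<Sum>m<n. \<Sum>t=m*d..<m*d+d. F (t div d * d))"
    by (rule sum.nat_group[symmetric])
  also have "\<dots> = (\<Sum>m<n. \<Sum>t=m*d..<m*d+d. F (m*d))"
  proof (intro sum.cong refl)
    fix m t assume "t \<in> {m*d..<m*d+d}"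
    then have "t div d = m" using assms by (auto intro: div_nat_eqI simp: mult.commute)
    then show "F (t div d * d) = F (m*d)" by simp
  qed
  also have "\<dots> = (\<Sum>m<n. of_nat d * F (m*d))" by simp
  also have "\<dots> = of_nat d * (\<Sum>k<n. F (k*d))" by (simp add: sum_distrib_left)
  finally show ?thesis .
qed

theorem mainTheorem7:
  fixes d :: nat and phi :: "nat \<Rightarrow> nat set list \<Rightarrow> real"
  assumes "d \<ge> 2" and "config d phi"
  shows "price d phi \<le> of_nat d"
proof -
  define ks where "ks = (\<lambda>t::nat. t mod d + 1)"
  define S where "S = (\<Sum>i=1..d. E_door phi i)"
  define B where "B t = emeasure (hist phi ks t) {h. \<not> {1..<Suc d} \<subseteq> last h}" for t
  have d0: "0 < d" using assms by simp
  have Eg1: "1 \<le> E_door phi i" if "1 \<le> i" "i \<le> d" for i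
  proof -
    have "\<forall>xs. valid_seq i xs \<longrightarrow> 0 \<le> phi i xs \<and> phi i xs \<le> 1" "summable (fund phi i)"
      using assms(2) that unfolding config_def by auto
    then have "sum (fund phi i) {0} \<le> suminf (fund phi i)"
      using sum_le_suminf[of "fund phi i" "{0}"] fund_nonneg[where phi=phi and j=i] by blast
    then show ?thesis unfolding E_door_def by (simp add: fund_def)
  qed
  have Spos: "0 < S"
  proof -
    have "E_door phi 1 \<le> S" unfolding S_def using d0 Eg1
      by (intro member_le_sum) (auto intro: order.trans[OF zero_le_one])
    then show ?thesis using Eg1[of 1] d0 by simp
  qed
  have bound: "(\<Sum>k<K. B (k*d)) \<le> ennreal S" for K
    using all_doors[OF assms(2), of "Suc d" K] unfolding B_def ks_def S_def
    by (simp add: atLeastLessThanSuc_atLeastAtMost)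
  have a_le: "ennreal (measure_pmf.prob (hist phi ks t) {h. last h \<noteq> {1..d}}) \<le> B (t div d * d)" for t
  proof -
    define s where "s = t div d * d"
    have st: "s \<le> t" unfolding s_def by (simp add: div_times_less_eq_dividend)
    have "ennreal (measure_pmf.prob (hist phi ks t) {h. last h \<noteq> {1..d}}) = emeasure (hist phi ks t) {h. last h \<noteq> {1..d}}"
      by (simp add: measure_pmf.emeasure_eq_measure)
    also have "\<dots> \<le> emeasure (hist phi ks t) {h. \<not> {1..<Suc d} \<subseteq> last (take (Suc s) h)}"
    proof (rule emeasure_mono_AE)
      show "AE x in measure_pmf (hist phi ks t). x \<in> {h. last h \<noteq> {1..d}} \<longrightarrow> x \<in> {h. \<not> {1..<Suc d} \<subseteq> last (take (Suc s) h)}"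
      proof (rule AE_pmfI, intro impI, unfold mem_Collect_eq)
        fix h assume h: "h \<in> set_pmf (hist phi ks t)" and ne: "last h \<noteq> {1..d}"
        note hs = hist_supp[OF h]
        have len: "length h = Suc t" using hs by simp
        have lst: "last h = h ! t" using len by (metis diff_Suc_1 last_conv_nth list.size(3) nat.distinct(1))
        have lt: "last (take (Suc s) h) = h ! s"
        proof -
          have l: "length (take (Suc s) h) = Suc s" using len st by simp
          then have "last (take (Suc s) h) = take (Suc s) h ! s"
            by (metis diff_Suc_1 last_conv_nth list.size(3) nat.distinct(1))
          then show ?thesis by simp
        qed
        have "h ! t \<subseteq> ks ` {..<t}" using hs by simp
        also have "\<dots> \<subseteq> {1..d}" unfolding ks_def using d0 by (auto simp: Suc_le_eq)
        finally have "last h \<subseteq> {1..d}" using lst by simp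
        moreover have "h ! s \<subseteq> h ! t" using hs st by simp
        ultimately show "\<not> {1..<Suc d} \<subseteq> last (take (Suc s) h)" using ne lt lst
          by (auto simp: atLeastLessThanSuc_atLeastAtMost)
      qed
    qed simp
    also have "\<dots> = emeasure (map_pmf (take (Suc s)) (hist phi ks t)) {h. \<not> {1..<Suc d} \<subseteq> last h}"
      by (simp add: vimage_def)
    also have "\<dots> = B s" unfolding B_def using st by (simp only: hist_prefix)
    finally show ?thesis unfolding s_def .
  qed
  have et: "exp_time d phi ks \<le> of_nat d * ennreal S"
    unfolding exp_time_def
  proof (rule suminf_le_const[OF summableI])
    fix n
    have "(\<Sum>t<n. ennreal (measure_pmf.prob (hist phi ks t) {h. last h \<noteq> {1..d}}))
        \<le> (\<Sum>t<n*d. ennreal (measure_pmf.prob (hist phi ks t) {h. last h \<noteq> {1..d}}))"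
      using d0 by (intro sum_mono2) auto
    also have "\<dots> \<le> (\<Sum>t<n*d. B (t div d * d))" by (intro sum_mono a_le)
    also have "\<dots> = of_nat d * (\<Sum>k<n. B (k*d))" by (rule group_sum[OF d0])
    also have "\<dots> \<le> of_nat d * ennreal S" by (intro mult_left_mono bound) simp
    finally show "(\<Sum>t<n. ennreal (measure_pmf.prob (hist phi ks t) {h. last h \<noteq> {1..d}})) \<le> of_nat d * ennreal S" .
  qed
  have "opt_time d phi \<le> exp_time d phi ks"
    unfolding opt_time_def by (rule INF_lower) (use d0 in \<open>auto simp: ks_def Suc_le_eq\<close>)
  then have "opt_time d phi \<le> of_nat d * ennreal S" using et by (rule order.trans)
  then have "price d phi \<le> (of_nat d * ennreal S) / ennreal S"
    unfolding price_def S_def[symmetric] by (rule divide_right_mono_ennreal)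
  also have "\<dots> = of_nat d" using Spos by (intro ennreal_mult_divide_eq) auto
  finally show ?thesis .
qed

end
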